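(* Let $\boldsymbol{\mathcal{A}}\in\mathbb{C}^{N\times N\times M\times M}$ and $\mathbf{v},\mathbf{w}\in\mathbb{C}^N$ with $\mathbf{w}^H\mathbf{v}=1$, and run the tensor non-Hermitian Lanczos process (described in the context) with arbitrary nonsingular choices $\boldsymbol{\gamma}_2,\boldsymbol{\gamma}_3,\dots$. Let $n\ge1$ and suppose $\boldsymbol{\beta}_2,\dots,\boldsymbol{\beta}_n$ are all nonsingular, so that $V_1,\dots,V_n$, $W_1^D,\dots,W_n^D$ and $\boldsymbol{\alpha}_1,\dots,\boldsymbol{\alpha}_n$ are defined. Then: (a) $W_k^D*V_j=\delta_{kj}I_M$ for all $1\le j,k\le n$, i.e. $\boldsymbol{\mathcal{W}}_n*\boldsymbol{\mathcal{V}}_n=\boldsymbol{\mathcal{I}}_*\in\mathbb{C}^{n\times n\times M\times M}$; (b) $\langle V_1,\dots,V_n\rangle=\mathcal{K}_n(\boldsymbol{\mathcal{A}},V)$ and $\langle W_1^D,\dots,W_n^D\rangle=\mathcal{K}_n^D(W^D,\boldsymbol{\mathcal{A}})$; (c) $\boldsymbol{\mathcal{T}}_n=\boldsymbol{\mathcal{W}}_n*\boldsymbol{\mathcal{A}}*\boldsymbol{\mathcal{V}}_n$.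
   Context: Slicing and products: for a 4-mode tensor, $\boldsymbol{\mathcal{A}}_{i_1,i_2,:,:}$ denotes the $M\times M$ matrix slice; for a 3-mode tensor, $A_{i,:,:}$ likewise. $*$-tensor product: $(\boldsymbol{\mathcal{A}}*\boldsymbol{\mathcal{B}})_{i_1,i_2,:,:}=\sum_k\boldsymbol{\mathcal{A}}_{i_1,k,:,:}\boldsymbol{\mathcal{B}}_{k,i_2,:,:}$. Tensor-hypervector product: $(\boldsymbol{\mathcal{A}}*A)_{i,:,:}=\sum_k\boldsymbol{\mathcal{A}}_{i,k,:,:}A_{k,:,:}$; left action of a 3-mode tensor $B^D$ (superscript $D$ marks tensors acting from the left): $(B^D*\boldsymbol{\mathcal{A}})^D_{i,:,:}=\sum_k B^D_{k,:,:}\boldsymbol{\mathcal{A}}_{k,i,:,:}$; hypervector inner product $B^D*A=\sum_kB^D_{k,:,:}A_{k,:,:}\in\mathbb{C}^{M\times M}$. These products are associative. For $\boldsymbol{\alpha}\in\mathbb{C}^{M\times M}$ and a 3-mode tensor $A$: $(A\times\boldsymbol{\alpha})_{i,:,:}=A_{i,:,:}\boldsymbol{\alpha}$, $(\boldsymbol{\alpha}\times A)_{i,:,:}=\boldsymbol{\alpha}A_{i,:,:}$; analogously for 4-mode tensors, $(\boldsymbol{\mathcal{A}}\times\boldsymbol{\alpha})_{i_1,i_2,:,:}=\boldsymbol{\mathcal{A}}_{i_1,i_2,:,:}\boldsymbol{\alpha}$ and $(\boldsymbol{\alpha}\times\boldsymbol{\mathcal{A}})_{i_1,i_2,:,:}=\boldsymbol{\alpha}\boldsymbol{\mathcal{A}}_{i_1,i_2,:,:}$.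 For $\mathbf{a}\in\mathbb{C}^N$, $\mathbf{a}\otimes I_M\in\mathbb{C}^{N\times M\times M}$ has slices $(\mathbf{a}\otimes I_M)_{i,:,:}=\mathbf{a}_iI_M$. The $*$-identity $\boldsymbol{\mathcal{I}}_*\in\mathbb{C}^{n\times n\times M\times M}$ has slices $I_M$ for $i_1=i_2$ and $0$ otherwise; $\boldsymbol{\mathcal{A}}^{0_*}=\boldsymbol{\mathcal{I}}_*$ and $\boldsymbol{\mathcal{A}}^{k_*}$ is the $k$-fold $*$-product of $\boldsymbol{\mathcal{A}}$ with itself. Krylov-type subspaces: for $A,B^D\in\mathbb{C}^{N\times M\times M}$, $\mathcal{K}_n(\boldsymbol{\mathcal{A}},A)=\{\sum_{k=0}^{n-1}(\boldsymbol{\mathcal{A}}^{k_*}\times\boldsymbol{\eta}_k)*A:\boldsymbol{\eta}_k\in\mathbb{C}^{M\times M}\}$ and $\mathcal{K}_n^D(B^D,\boldsymbol{\mathcal{A}})=\{B^D*\sum_{k=0}^{n-1}(\boldsymbol{\eta}_k^H\times\boldsymbol{\mathcal{A}}^{k_*}):\boldsymbol{\eta}_k\in\mathbb{C}^{M\times M}\}$. For $V_1,\dots,V_n\in\mathbb{C}^{N\times M\times M}$, $\langle V_1,\dots,V_n\rangle=\{\sum_kV_k\times\boldsymbol{\eta}_k:\boldsymbol{\eta}_k\in\mathbb{C}^{M\times M}\}$, and for $W_1^D,\dots,W_n^D$, $\langle W_1^D,\dots,W_n^D\rangle=\{\sum_k\boldsymbol{\eta}_k\times W_k^D:\boldsymbol{\eta}_k\in\mathbb{C}^{M\times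 M}\}$. Tensor non-Hermitian Lanczos process: set $V=\mathbf{v}\otimes I_M$, $W^D=\overline{\mathbf{w}}\otimes I_M$, $V_0=W_0^D=0$, $\boldsymbol{\beta}_1=0$, $V_1=V$, $W_1^D=W^D$. For $k=1,2,\dots$: $\boldsymbol{\alpha}_k=W_k^D*\boldsymbol{\mathcal{A}}*V_k$; $\widehat W_{k+1}^D=W_k^D*\boldsymbol{\mathcal{A}}-\boldsymbol{\alpha}_k\times W_k^D-\boldsymbol{\beta}_k\times W_{k-1}^D$; $\widehat V_{k+1}=\boldsymbol{\mathcal{A}}*V_k-V_k\times\boldsymbol{\alpha}_k-V_{k-1}\times\boldsymbol{\gamma}_k$ (the term with $\boldsymbol{\gamma}_1$ vanishes since $V_0=0$); choose a nonsingular $\boldsymbol{\gamma}_{k+1}\in\mathbb{C}^{M\times M}$; $\boldsymbol{\beta}_{k+1}=\boldsymbol{\gamma}_{k+1}^{-1}(\widehat W_{k+1}^D*\widehat V_{k+1})$; if $\boldsymbol{\beta}_{k+1}$ is singular the process stops, otherwise $V_{k+1}=\widehat V_{k+1}\times\boldsymbol{\beta}_{k+1}^{-1}$ and $W_{k+1}^D=\boldsymbol{\gamma}_{k+1}^{-1}\times\widehat W_{k+1}^D$. Basis tensors: $\boldsymbol{\mathcal{V}}_n\in\mathbb{C}^{N\times n\times M\times M}$ with $(\boldsymbol{\mathcal{V}}_n)_{:,k,:,:}=V_k$ and $\boldsymbol{\mathcal{W}}_n\in\mathbb{C}^{n\times N\times M\times M}$ with $(\boldsymbol{\mathcal{W}}_n)_{k,:,:,:}=W_k^D$,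 $k=1,\dots,n$. Tridiagonal tensor $\boldsymbol{\mathcal{T}}_n\in\mathbb{C}^{n\times n\times M\times M}$: $(\boldsymbol{\mathcal{T}}_n)_{i,i,:,:}=\boldsymbol{\alpha}_i$ ($1\le i\le n$), $(\boldsymbol{\mathcal{T}}_n)_{i,i+1,:,:}=\boldsymbol{\gamma}_{i+1}$ ($1\le i\le n-1$), $(\boldsymbol{\mathcal{T}}_n)_{i,i-1,:,:}=\boldsymbol{\beta}_i$ ($2\le i\le n$), all other slices zero. *)

theory Defs
  imports "HOL-Analysis.Analysis"
begin

text \<open>M x M complex matrices are modelled as complex^'m^'m ('m a finite index type of size M).
  A 3-mode tensor in C^(N x M x M) is a function 'N => complex^'m^'m, a 4-mode tensor
  in C^(P x Q x M x M) is a function 'p => 'q => complex^'m^'m.  The N-dimensional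
  modes are indexed by a finite type 'N; the Lanczos-step modes (of size n) are indexed
  by naturals 1..n.\<close>

type_synonym 'm sqm = "complex^'m^'m"

definition mH :: "('m::finite) sqm \<Rightarrow> ('m::finite) sqm" where
  "mH X = (\<chi> i j. cnj (X $ j $ i))"

definition tmul :: "('a \<Rightarrow> 'b::finite \<Rightarrow> ('m::finite) sqm) \<Rightarrow> ('b \<Rightarrow> 'c \<Rightarrow> ('m::finite) sqm) \<Rightarrow> ('a \<Rightarrow> 'c \<Rightarrow> ('m::finite) sqm)" where
  "tmul A B = (\<lambda>i1 i2. \<Sum>k\<in>UNIV. A i1 k ** B k i2)"

definition tvec :: "('a \<Rightarrow> 'b::finite \<Rightarrow> ('m::finite) sqm) \<Rightarrow> ('b \<Rightarrow> ('m::finite) sqm) \<Rightarrow> ('a \<Rightarrow> ('m::finite) sqm)" where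
  "tvec A X = (\<lambda>i. \<Sum>k\<in>UNIV. A i k ** X k)"

definition dvec :: "('b::finite \<Rightarrow> ('m::finite) sqm) \<Rightarrow> ('b \<Rightarrow> 'a \<Rightarrow> ('m::finite) sqm) \<Rightarrow> ('a \<Rightarrow> ('m::finite) sqm)" where
  "dvec B A = (\<lambda>i. \<Sum>k\<in>UNIV. B k ** A k i)"

definition hinner :: "('b::finite \<Rightarrow> ('m::finite) sqm) \<Rightarrow> ('b \<Rightarrow> ('m::finite) sqm) \<Rightarrow> ('m::finite) sqm" where
  "hinner B X = (\<Sum>k\<in>UNIV. B k ** X k)"

definition tid :: "'a \<Rightarrow> 'a \<Rightarrow> ('m::finite) sqm" where
  "tid = (\<lambda>i1 i2. if i1 = i2 then mat 1 else 0)"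

definition tpow :: "('a::finite \<Rightarrow> 'a \<Rightarrow> ('m::finite) sqm) \<Rightarrow> nat \<Rightarrow> ('a \<Rightarrow> 'a \<Rightarrow> ('m::finite) sqm)" where
  "tpow A k = ((\<lambda>B. tmul A B) ^^ k) tid"

text \<open>a (x) I_M, and conj(a) (x) I_M.\<close>
definition kronI :: "complex^'n \<Rightarrow> ('n \<Rightarrow> ('m::finite) sqm)" where
  "kronI a = (\<lambda>i. mat (a $ i))"

definition krylov :: "('a::finite \<Rightarrow> 'a \<Rightarrow> ('m::finite) sqm) \<Rightarrow> ('a \<Rightarrow> ('m::finite) sqm) \<Rightarrow> nat \<Rightarrow> ('a \<Rightarrow> ('m::finite) sqm) set" where
  "krylov A X n = {(\<lambda>i. \<Sum>k<n. tvec (\<lambda>i1 i2. tpow A k i1 i2 ** \<eta> k) X i) | \<eta>. True}"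

definition krylovD :: "('a::finite \<Rightarrow> ('m::finite) sqm) \<Rightarrow> ('a \<Rightarrow> 'a \<Rightarrow> ('m::finite) sqm) \<Rightarrow> nat \<Rightarrow> ('a \<Rightarrow> ('m::finite) sqm) set" where
  "krylovD B A n = {dvec B (\<lambda>i1 i2. \<Sum>k<n. mH (\<eta> k) ** tpow A k i1 i2) | \<eta>. True}"

definition spanR :: "(nat \<Rightarrow> 'a \<Rightarrow> ('m::finite) sqm) \<Rightarrow> nat \<Rightarrow> ('a \<Rightarrow> ('m::finite) sqm) set" where
  "spanR V n = {(\<lambda>i. \<Sum>k\<in>{1..n}. V k i ** \<eta> k) | \<eta>. True}"

definition spanL :: "(nat \<Rightarrow> 'a \<Rightarrow> ('m::finite) sqm) \<Rightarrow> nat \<Rightarrow> ('a \<Rightarrow> ('m::finite) sqm) set" where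
  "spanL W n = {(\<lambda>i. \<Sum>k\<in>{1..n}. \<eta> k ** W k i) | \<eta>. True}"

text \<open>Tensor non-Hermitian Lanczos process.  lanczos_state A v w \<gamma> m is the state at
  step k = m+1, i.e. the tuple (V_{k-1}, V_k, W_{k-1}^D, W_k^D, beta_k).
  The process is continued with matrix_inv even if some beta is singular; the theorem
  only speaks about the steps before any singular beta occurs.\<close>
fun lanczos_state ::
  "('a::finite \<Rightarrow> 'a \<Rightarrow> ('m::finite) sqm) \<Rightarrow> complex^'a \<Rightarrow> complex^'a \<Rightarrow> (nat \<Rightarrow> ('m::finite) sqm) \<Rightarrow> nat \<Rightarrow>
     ('a \<Rightarrow> ('m::finite) sqm) \<times> ('a \<Rightarrow> ('m::finite) sqm) \<times> ('a \<Rightarrow> ('m::finite) sqm) \<times> ('a \<Rightarrow> ('m::finite) sqm) \<times> ('m::finite) sqm" where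
  "lanczos_state A v w \<gamma> 0 = ((\<lambda>_. 0), kronI v, (\<lambda>_. 0), kronI (\<chi> i. cnj (w $ i)), 0)"
| "lanczos_state A v w \<gamma> (Suc m) =
     (case lanczos_state A v w \<gamma> m of (Vp, Vc, Wp, Wc, b) \<Rightarrow>
       (let k = Suc m;
            a = hinner Wc (tvec A Vc);
            hW = (\<lambda>i. dvec Wc A i - a ** Wc i - b ** Wp i);
            hV = (\<lambda>i. tvec A Vc i - Vc i ** a - Vp i ** \<gamma> k);
            b' = matrix_inv (\<gamma> (Suc k)) ** hinner hW hV
        in (Vc, (\<lambda>i. hV i ** matrix_inv b'), Wc, (\<lambda>i. matrix_inv (\<gamma> (Suc k)) ** hW i), b')))"

definition lzV where "lzV A v w \<gamma> k = fst (snd (lanczos_state A v w \<gamma> (k - 1)))"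
definition lzW where "lzW A v w \<gamma> k = fst (snd (snd (snd (lanczos_state A v w \<gamma> (k - 1)))))"
definition lzbeta where "lzbeta A v w \<gamma> k = snd (snd (snd (snd (lanczos_state A v w \<gamma> (k - 1)))))"
definition lzalpha where "lzalpha A v w \<gamma> k = hinner (lzW A v w \<gamma> k) (tvec A (lzV A v w \<gamma> k))"

definition basisV where "basisV A v w \<gamma> n = (\<lambda>i k. if k \<in> {1..n} then lzV A v w \<gamma> k i else 0)"
definition basisW where "basisW A v w \<gamma> n = (\<lambda>k i. if k \<in> {1..n} then lzW A v w \<gamma> k i else 0)"

definition triT where "triT A v w \<gamma> n = (\<lambda>i j.
   if i \<in> {1..n} \<and> j \<in> {1..n} then
     (if i = j then lzalpha A v w \<gamma> i
      else if j = i + 1 then \<gamma> (i + 1)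
      else if i = j + 1 then lzbeta A v w \<gamma> i
      else 0)
   else 0)"

end

theory Submission
  imports Defs
begin
section \<open>Matrix algebra\<close>

lemma mm_radd: "((A::complex^'m^'m) + B) ** C = A ** C + B ** C"
  by (simp add: matrix_matrix_mult_def vec_eq_iff sum.distrib[symmetric] distrib_right)
lemma mm_ladd: "(C::complex^'m^'m) ** (A + B) = C ** A + C ** B"
  by (rule matrix_add_ldistrib)
lemma mm_rdiff: "((A::complex^'m^'m) - B) ** C = A ** C - B ** C"
  by (simp add: matrix_matrix_mult_def vec_eq_iff sum_subtractf[symmetric] left_diff_distrib)
lemma mm_ldiff: "(C::complex^'m^'m) ** (A - B) = C ** A - C ** B"
  by (simp add: matrix_matrix_mult_def vec_eq_iff sum_subtractf[symmetric] right_diff_distrib)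
lemma mm_rsum: "(sum (f::_\<Rightarrow>complex^'m^'m) S) ** (C::complex^'m^'m) = (\<Sum>k\<in>S. f k ** C)"
  by (induction S rule: infinite_finite_induct) (auto simp: mm_radd)
lemma mm_lsum: "(C::complex^'m^'m) ** (sum (f::_\<Rightarrow>complex^'m^'m) S) = (\<Sum>k\<in>S. C ** f k)"
  by (induction S rule: infinite_finite_induct) (auto simp: mm_ladd)

lemma mat_l: "mat c ** (X::complex^'m^'m) = (\<chi> i j. c * X$i$j)"
proof -
  have "\<And>i j. (\<Sum>k\<in>UNIV. (if i = k then c else 0) * X $ k $ j) = c * X$i$j"
  proof -
    fix i j
    have "(\<Sum>k\<in>UNIV. (if i = k then c else 0) * X $ k $ j) = (\<Sum>k\<in>UNIV. (if i = k then c * X $ k $ j else 0))"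
      by (rule sum.cong) auto
    then show "(\<Sum>k\<in>UNIV. (if i = k then c else 0) * X $ k $ j) = c * X$i$j" by simp
  qed
  then show ?thesis unfolding matrix_matrix_mult_def mat_def vec_eq_iff by simp
qed
lemma mat_r: "(X::complex^'m^'m) ** mat c = (\<chi> i j. X$i$j * c)"
proof -
  have "\<And>i j. (\<Sum>k\<in>UNIV. X $ i $ k * (if k = j then c else 0)) = X$i$j * c"
  proof -
    fix i j
    have "(\<Sum>k\<in>UNIV. X $ i $ k * (if k = j then c else 0)) = (\<Sum>k\<in>UNIV. (if k = j then X $ i $ k * c else 0))"
      by (rule sum.cong) auto
    then show "(\<Sum>k\<in>UNIV. X $ i $ k * (if k = j then c else 0)) = X$i$j * c" by simp
  qed
  then show ?thesis unfolding matrix_matrix_mult_def mat_def vec_eq_iff by simp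
qed
lemma mat_comm: "mat c ** (X::complex^'m^'m) = X ** mat c"
  by (simp add: mat_l mat_r mult.commute)
lemma mat_mm: "mat a ** mat b = (mat (a*b) :: complex^'m^'m)"
  by (simp add: mat_l) (simp add: mat_def vec_eq_iff)
lemma mat_add: "mat a + mat b = (mat (a+b) :: complex^'m^'m)"
  by (simp add: mat_def vec_eq_iff)
lemma mat_sum: "(\<Sum>k\<in>S. mat (f k)) = (mat (sum f S) :: complex^'m^'m)"
  by (induction S rule: infinite_finite_induct) (auto simp: mat_add)

lemma inv_r: "invertible (A::complex^'m^'m) \<Longrightarrow> A ** matrix_inv A = mat 1"
  unfolding invertible_def matrix_inv_def by (rule someI_ex[THEN conjunct1])
lemma inv_l: "invertible (A::complex^'m^'m) \<Longrightarrow> matrix_inv A ** A = mat 1"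
  unfolding invertible_def matrix_inv_def by (rule someI_ex[THEN conjunct2])

section \<open>Tensor algebra\<close>

lemma tmul_assoc: "tmul (tmul A B) C = tmul A (tmul B C)"
  unfolding tmul_def
  by (rule ext)+ (simp add: mm_rsum mm_lsum matrix_mul_assoc, rule sum.swap)

lemma tvec_tvec: "tvec A (tvec B X) = tvec (tmul A B) X"
  unfolding tmul_def tvec_def
  by (rule ext) (simp add: mm_rsum mm_lsum matrix_mul_assoc, rule sum.swap)

lemma dvec_dvec: "dvec (dvec B T) A = dvec B (tmul T A)"
  unfolding tmul_def dvec_def
  by (rule ext) (simp add: mm_rsum mm_lsum matrix_mul_assoc, rule sum.swap)

lemma hinner_dvec: "hinner (dvec W A) X = hinner W (tvec A X)"
  unfolding hinner_def dvec_def tvec_def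
  by (simp add: mm_rsum mm_lsum matrix_mul_assoc, rule sum.swap)

lemma sum_delta_mm: "(\<Sum>k\<in>(UNIV::'a::finite set). (if i = k then (mat 1::complex^'m^'m) else 0) ** X k) = X i"
proof -
  have "(\<Sum>k\<in>(UNIV::'a set). (if i = k then (mat 1::complex^'m^'m) else 0) ** X k) = (\<Sum>k\<in>UNIV. if i = k then X k else 0)"
    by (rule sum.cong) auto
  then show ?thesis by simp
qed
lemma sum_delta_mm': "(\<Sum>k\<in>(UNIV::'a::finite set). X k ** (if k = i then (mat 1::complex^'m^'m) else 0)) = X i"
proof -
  have "(\<Sum>k\<in>(UNIV::'a set). X k ** (if k = i then (mat 1::complex^'m^'m) else 0)) = (\<Sum>k\<in>UNIV. if k = i then X k else 0)"
    by (rule sum.cong) auto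
  then show ?thesis by simp
qed

lemma tmul_tid_l: "tmul tid A = (A::'a::finite \<Rightarrow> 'b \<Rightarrow> complex^'m^'m)"
  unfolding tmul_def tid_def by (simp add: sum_delta_mm)
lemma tmul_tid_r: "tmul A tid = (A::'a \<Rightarrow> 'b::finite \<Rightarrow> complex^'m^'m)"
  unfolding tmul_def tid_def by (rule ext)+ (simp add: sum_delta_mm')
lemma tvec_tid: "tvec tid X = (X::'a::finite \<Rightarrow> complex^'m^'m)"
  unfolding tvec_def tid_def by (simp add: sum_delta_mm)
lemma dvec_tid: "dvec B tid = (B::'a::finite \<Rightarrow> complex^'m^'m)"
  unfolding dvec_def tid_def by (rule ext) (simp add: sum_delta_mm')

lemma tpow_0: "tpow A 0 = tid" by (simp add: tpow_def)
lemma tpow_Suc: "tpow A (Suc k) = tmul A (tpow A k)" by (simp add: tpow_def)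
lemma tpow_Suc': "tpow A (Suc k) = tmul (tpow A k) A"
proof (induction k)
  case 0 then show ?case by (simp add: tpow_Suc tpow_0 tmul_tid_l tmul_tid_r)
next
  case (Suc k) then show ?case by (metis tpow_Suc tmul_assoc)
qed

lemma hinner_ladd: "hinner (\<lambda>i. W i + U i) X = hinner W X + hinner U X"
  by (simp add: hinner_def mm_radd sum.distrib)
lemma hinner_ldiff: "hinner (\<lambda>i. W i - U i) X = hinner W X - hinner U X"
  by (simp add: hinner_def mm_rdiff sum_subtractf)
lemma hinner_radd: "hinner W (\<lambda>i. X i + Y i) = hinner W X + hinner W Y"
  by (simp add: hinner_def mm_ladd sum.distrib)
lemma hinner_rdiff: "hinner W (\<lambda>i. X i - Y i) = hinner W X - hinner W Y"
  by (simp add: hinner_def mm_ldiff sum_subtractf)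
lemma hinner_lmul: "hinner (\<lambda>i. c ** W i) X = c ** hinner W X"
  by (simp add: hinner_def mm_lsum matrix_mul_assoc)
lemma hinner_rmul: "hinner W (\<lambda>i. X i ** c) = hinner W X ** c"
  by (simp add: hinner_def mm_rsum matrix_mul_assoc)
lemma hinner_l0: "hinner (\<lambda>i. 0) X = 0" by (simp add: hinner_def)
lemma hinner_r0: "hinner W (\<lambda>i. 0) = 0" by (simp add: hinner_def)
lemma tvec_0: "tvec A (\<lambda>i. 0) = (\<lambda>i. 0)" by (simp add: tvec_def)
lemma dvec_0: "dvec (\<lambda>i. 0) A = (\<lambda>i. 0)" by (simp add: dvec_def)
lemma tvec_rmul: "tvec A (\<lambda>i. X i ** c) = (\<lambda>i. tvec A X i ** c)"
  by (simp add: tvec_def mm_rsum matrix_mul_assoc)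
lemma dvec_lmul: "dvec (\<lambda>i. c ** W i) A = (\<lambda>i. c ** dvec W A i)"
  by (simp add: dvec_def mm_lsum matrix_mul_assoc)
section \<open>Spans\<close>

lemma spanR_iff: "x \<in> spanR V n \<longleftrightarrow> (\<exists>\<eta>. x = (\<lambda>i. \<Sum>k\<in>{1..n}. V k i ** \<eta> k))"
  by (auto simp: spanR_def)
lemma spanL_iff: "x \<in> spanL W n \<longleftrightarrow> (\<exists>\<eta>. x = (\<lambda>i. \<Sum>k\<in>{1..n}. \<eta> k ** W k i))"
  by (auto simp: spanL_def)

lemma spanR_zero: "(\<lambda>i. 0) \<in> spanR (V::nat \<Rightarrow> 'a \<Rightarrow> complex^'m^'m) n"
  unfolding spanR_iff by (rule exI[of _ "\<lambda>k. 0"]) simp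
lemma spanL_zero: "(\<lambda>i. 0) \<in> spanL (V::nat \<Rightarrow> 'a \<Rightarrow> complex^'m^'m) n"
  unfolding spanL_iff by (rule exI[of _ "\<lambda>k. 0"]) simp

lemma spanR_add: "x \<in> spanR (V::nat \<Rightarrow> 'a \<Rightarrow> complex^'m^'m) n \<Longrightarrow> y \<in> spanR V n \<Longrightarrow> (\<lambda>i. x i + y i) \<in> spanR V n"
  unfolding spanR_iff
proof (elim exE)
  fix \<eta>1 \<eta>2 assume "x = (\<lambda>i. \<Sum>k\<in>{1..n}. V k i ** \<eta>1 k)" "y = (\<lambda>i. \<Sum>k\<in>{1..n}. V k i ** \<eta>2 k)"
  then show "\<exists>\<eta>. (\<lambda>i. x i + y i) = (\<lambda>i. \<Sum>k\<in>{1..n}. V k i ** \<eta> k)"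
    by (intro exI[of _ "\<lambda>k. \<eta>1 k + \<eta>2 k"]) (simp add: mm_ladd sum.distrib)
qed
lemma spanL_add: "x \<in> spanL (V::nat \<Rightarrow> 'a \<Rightarrow> complex^'m^'m) n \<Longrightarrow> y \<in> spanL V n \<Longrightarrow> (\<lambda>i. x i + y i) \<in> spanL V n"
  unfolding spanL_iff
proof (elim exE)
  fix \<eta>1 \<eta>2 assume "x = (\<lambda>i. \<Sum>k\<in>{1..n}. \<eta>1 k ** V k i)" "y = (\<lambda>i. \<Sum>k\<in>{1..n}. \<eta>2 k ** V k i)"
  then show "\<exists>\<eta>. (\<lambda>i. x i + y i) = (\<lambda>i. \<Sum>k\<in>{1..n}. \<eta> k ** V k i)"
    by (intro exI[of _ "\<lambda>k. \<eta>1 k + \<eta>2 k"]) (simp add: mm_radd sum.distrib)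
qed
lemma spanR_diff: "x \<in> spanR (V::nat \<Rightarrow> 'a \<Rightarrow> complex^'m^'m) n \<Longrightarrow> y \<in> spanR V n \<Longrightarrow> (\<lambda>i. x i - y i) \<in> spanR V n"
  unfolding spanR_iff
proof (elim exE)
  fix \<eta>1 \<eta>2 assume "x = (\<lambda>i. \<Sum>k\<in>{1..n}. V k i ** \<eta>1 k)" "y = (\<lambda>i. \<Sum>k\<in>{1..n}. V k i ** \<eta>2 k)"
  then show "\<exists>\<eta>. (\<lambda>i. x i - y i) = (\<lambda>i. \<Sum>k\<in>{1..n}. V k i ** \<eta> k)"
    by (intro exI[of _ "\<lambda>k. \<eta>1 k - \<eta>2 k"]) (simp add: mm_ldiff sum_subtractf)
qed
lemma spanL_diff: "x \<in> spanL (V::nat \<Rightarrow> 'a \<Rightarrow> complex^'m^'m) n \<Longrightarrow> y \<in> spanL V n \<Longrightarrow> (\<lambda>i. x i - y i) \<in> spanL V n"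
  unfolding spanL_iff
proof (elim exE)
  fix \<eta>1 \<eta>2 assume "x = (\<lambda>i. \<Sum>k\<in>{1..n}. \<eta>1 k ** V k i)" "y = (\<lambda>i. \<Sum>k\<in>{1..n}. \<eta>2 k ** V k i)"
  then show "\<exists>\<eta>. (\<lambda>i. x i - y i) = (\<lambda>i. \<Sum>k\<in>{1..n}. \<eta> k ** V k i)"
    by (intro exI[of _ "\<lambda>k. \<eta>1 k - \<eta>2 k"]) (simp add: mm_rdiff sum_subtractf)
qed
lemma spanR_mul: "x \<in> spanR (V::nat \<Rightarrow> 'a \<Rightarrow> complex^'m^'m) n \<Longrightarrow> (\<lambda>i. x i ** c) \<in> spanR V n"
  unfolding spanR_iff
proof (elim exE)
  fix \<eta>1 assume "x = (\<lambda>i. \<Sum>k\<in>{1..n}. V k i ** \<eta>1 k)"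
  then show "\<exists>\<eta>. (\<lambda>i. x i ** c) = (\<lambda>i. \<Sum>k\<in>{1..n}. V k i ** \<eta> k)"
    by (intro exI[of _ "\<lambda>k. \<eta>1 k ** c"]) (simp add: mm_rsum matrix_mul_assoc)
qed
lemma spanL_mul: "x \<in> spanL (V::nat \<Rightarrow> 'a \<Rightarrow> complex^'m^'m) n \<Longrightarrow> (\<lambda>i. c ** x i) \<in> spanL V n"
  unfolding spanL_iff
proof (elim exE)
  fix \<eta>1 assume "x = (\<lambda>i. \<Sum>k\<in>{1..n}. \<eta>1 k ** V k i)"
  then show "\<exists>\<eta>. (\<lambda>i. c ** x i) = (\<lambda>i. \<Sum>k\<in>{1..n}. \<eta> k ** V k i)"
    by (intro exI[of _ "\<lambda>k. c ** \<eta>1 k"]) (simp add: mm_lsum matrix_mul_assoc)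
qed

lemma spanR_gen: "k \<in> {1..n} \<Longrightarrow> V k \<in> spanR (V::nat \<Rightarrow> 'a \<Rightarrow> complex^'m^'m) n"
  unfolding spanR_iff
proof (intro exI[of _ "\<lambda>j. if j = k then mat 1 else 0"] ext)
  fix i assume k: "k \<in> {1..n}"
  have "(\<Sum>j\<in>{1..n}. V j i ** (if j = k then mat 1 else 0)) = (\<Sum>j\<in>{1..n}. if j = k then V j i else 0)"
    by (rule sum.cong) auto
  also have "\<dots> = V k i" using k by simp
  finally show "V k i = (\<Sum>j\<in>{1..n}. V j i ** (if j = k then mat 1 else 0))" by simp
qed
lemma spanL_gen: "k \<in> {1..n} \<Longrightarrow> V k \<in> spanL (V::nat \<Rightarrow> 'a \<Rightarrow> complex^'m^'m) n"
  unfolding spanL_iff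
proof (intro exI[of _ "\<lambda>j. if j = k then mat 1 else 0"] ext)
  fix i assume k: "k \<in> {1..n}"
  have "(\<Sum>j\<in>{1..n}. (if j = k then mat 1 else 0) ** V j i) = (\<Sum>j\<in>{1..n}. if j = k then V j i else 0)"
    by (rule sum.cong) auto
  also have "\<dots> = V k i" using k by simp
  finally show "V k i = (\<Sum>j\<in>{1..n}. (if j = k then mat 1 else 0) ** V j i)" by simp
qed

lemma spanR_mono: "n \<le> m \<Longrightarrow> x \<in> spanR (V::nat \<Rightarrow> 'a \<Rightarrow> complex^'m^'m) n \<Longrightarrow> x \<in> spanR V m"
  unfolding spanR_iff
proof (elim exE)
  fix \<eta> assume nm: "n \<le> m" and x: "x = (\<lambda>i. \<Sum>k\<in>{1..n}. V k i ** \<eta> k)"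
  show "\<exists>\<eta>. x = (\<lambda>i. \<Sum>k\<in>{1..m}. V k i ** \<eta> k)"
  proof (intro exI[of _ "\<lambda>k. if k \<le> n then \<eta> k else 0"] ext)
    fix i
    have "(\<Sum>k\<in>{1..m}. V k i ** (if k \<le> n then \<eta> k else 0)) = (\<Sum>k\<in>{1..n}. V k i ** \<eta> k)"
      by (rule sum.mono_neutral_cong_right) (use nm in auto)
    then show "x i = (\<Sum>k\<in>{1..m}. V k i ** (if k \<le> n then \<eta> k else 0))" using x by simp
  qed
qed
lemma spanL_mono: "n \<le> m \<Longrightarrow> x \<in> spanL (V::nat \<Rightarrow> 'a \<Rightarrow> complex^'m^'m) n \<Longrightarrow> x \<in> spanL V m"
  unfolding spanL_iff
proof (elim exE)
  fix \<eta> assume nm: "n \<le> m" and x: "x = (\<lambda>i. \<Sum>k\<in>{1..n}. \<eta> k ** V k i)"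
  show "\<exists>\<eta>. x = (\<lambda>i. \<Sum>k\<in>{1..m}. \<eta> k ** V k i)"
  proof (intro exI[of _ "\<lambda>k. if k \<le> n then \<eta> k else 0"] ext)
    fix i
    have "(\<Sum>k\<in>{1..m}. (if k \<le> n then \<eta> k else 0) ** V k i) = (\<Sum>k\<in>{1..n}. \<eta> k ** V k i)"
      by (rule sum.mono_neutral_cong_right) (use nm in auto)
    then show "x i = (\<Sum>k\<in>{1..m}. (if k \<le> n then \<eta> k else 0) ** V k i)" using x by simp
  qed
qed

lemma spanR_sub:
  assumes U: "\<forall>k\<in>{1..n}. U k \<in> spanR (V::nat \<Rightarrow> 'a \<Rightarrow> complex^'m^'m) m"
    and x: "x \<in> spanR U n"
  shows "x \<in> spanR V m"
proof -
  obtain \<eta> where xe: "x = (\<lambda>i. \<Sum>k\<in>{1..n}. U k i ** \<eta> k)" using x spanR_iff by blast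
  have "\<And>S. S \<subseteq> {1..n} \<Longrightarrow> (\<lambda>i. \<Sum>k\<in>S. U k i ** \<eta> k) \<in> spanR V m"
  proof -
    fix S :: "nat set" assume sub: "S \<subseteq> {1..n}"
    have fin: "finite S" using sub finite_subset by blast
    from fin sub show "(\<lambda>i. \<Sum>k\<in>S. U k i ** \<eta> k) \<in> spanR V m"
    proof (induction S rule: finite_induct)
      case empty then show ?case by (simp add: spanR_zero)
    next
      case (insert a F)
      then have "(\<lambda>i. U a i ** \<eta> a + (\<Sum>k\<in>F. U k i ** \<eta> k)) \<in> spanR V m"
        using U by (intro spanR_add spanR_mul) auto
      then show ?case using insert by simp
    qed
  qed
  then show ?thesis using xe by simp
qed
lemma spanL_sub:
  assumes U: "\<forall>k\<in>{1..n}. U k \<in> spanL (V::nat \<Rightarrow> 'a \<Rightarrow> complex^'m^'m) m"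
    and x: "x \<in> spanL U n"
  shows "x \<in> spanL V m"
proof -
  obtain \<eta> where xe: "x = (\<lambda>i. \<Sum>k\<in>{1..n}. \<eta> k ** U k i)" using x spanL_iff by blast
  have "\<And>S. S \<subseteq> {1..n} \<Longrightarrow> (\<lambda>i. \<Sum>k\<in>S. \<eta> k ** U k i) \<in> spanL V m"
  proof -
    fix S :: "nat set" assume sub: "S \<subseteq> {1..n}"
    have fin: "finite S" using sub finite_subset by blast
    from fin sub show "(\<lambda>i. \<Sum>k\<in>S. \<eta> k ** U k i) \<in> spanL V m"
    proof (induction S rule: finite_induct)
      case empty then show ?case by (simp add: spanL_zero)
    next
      case (insert a F)
      then have "(\<lambda>i. \<eta> a ** U a i + (\<Sum>k\<in>F. \<eta> k ** U k i)) \<in> spanL V m"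
        using U by (intro spanL_add spanL_mul) auto
      then show ?case using insert by simp
    qed
  qed
  then show ?thesis using xe by simp
qed

lemma spanR_tvec: "x \<in> spanR (U::nat \<Rightarrow> 'b::finite \<Rightarrow> complex^'m^'m) n \<Longrightarrow> tvec A x \<in> spanR (\<lambda>k. tvec A (U k)) n"
  unfolding spanR_iff
proof (elim exE)
  fix \<eta> assume x: "x = (\<lambda>i. \<Sum>k\<in>{1..n}. U k i ** \<eta> k)"
  show "\<exists>\<eta>. tvec A x = (\<lambda>i. \<Sum>k\<in>{1..n}. tvec A (U k) i ** \<eta> k)"
    by (rule exI[of _ \<eta>]) (simp add: x tvec_def mm_lsum mm_rsum matrix_mul_assoc, rule ext, rule sum.swap)
qed
lemma spanL_dvec: "x \<in> spanL (U::nat \<Rightarrow> 'b::finite \<Rightarrow> complex^'m^'m) n \<Longrightarrow> dvec x A \<in> spanL (\<lambda>k. dvec (U k) A) n"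
  unfolding spanL_iff
proof (elim exE)
  fix \<eta> assume x: "x = (\<lambda>i. \<Sum>k\<in>{1..n}. \<eta> k ** U k i)"
  show "\<exists>\<eta>. dvec x A = (\<lambda>i. \<Sum>k\<in>{1..n}. \<eta> k ** dvec (U k) A i)"
    by (rule exI[of _ \<eta>]) (simp add: x dvec_def mm_lsum mm_rsum matrix_mul_assoc, rule ext, rule sum.swap)
qed

lemma spanR_cong: assumes "\<And>k. k \<in> {1..n} \<Longrightarrow> U k = V k" shows "spanR U n = spanR V n"
proof -
  have eq: "\<And>\<eta>. (\<lambda>i. \<Sum>k\<in>{1..n}. U k i ** \<eta> k) = (\<lambda>i. \<Sum>k\<in>{1..n}. V k i ** \<eta> k)"
    using assms by (intro ext sum.cong) auto
  show ?thesis by (rule set_eqI) (simp only: spanR_iff eq)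
qed
lemma spanL_cong: assumes "\<And>k. k \<in> {1..n} \<Longrightarrow> U k = V k" shows "spanL U n = spanL V n"
proof -
  have eq: "\<And>\<eta>. (\<lambda>i. \<Sum>k\<in>{1..n}. \<eta> k ** U k i) = (\<lambda>i. \<Sum>k\<in>{1..n}. \<eta> k ** V k i)"
    using assms by (intro ext sum.cong) auto
  show ?thesis by (rule set_eqI) (simp only: spanL_iff eq)
qed
section \<open>Lanczos recurrences\<close>

locale lz =
  fixes A :: "'N::finite \<Rightarrow> 'N \<Rightarrow> complex^'m^'m"
    and v w :: "complex^'N"
    and \<gamma> :: "nat \<Rightarrow> complex^'m^'m"
begin

definition VV where "VV k = (if k = 0 then (\<lambda>_. 0) else lzV A v w \<gamma> k)"
definition WW where "WW k = (if k = 0 then (\<lambda>_. 0) else lzW A v w \<gamma> k)"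
abbreviation al where "al k \<equiv> lzalpha A v w \<gamma> k"
abbreviation be where "be k \<equiv> lzbeta A v w \<gamma> k"
definition hV where "hV m = (\<lambda>i. tvec A (VV (Suc m)) i - VV (Suc m) i ** al (Suc m) - VV m i ** \<gamma> (Suc m))"
definition hW where "hW m = (\<lambda>i. dvec (WW (Suc m)) A i - al (Suc m) ** WW (Suc m) i - be (Suc m) ** WW m i)"

lemma fst_st: "fst (lanczos_state A v w \<gamma> m) = VV m"
proof (cases m)
  case 0 then show ?thesis by (simp add: VV_def)
next
  case (Suc k)
  obtain a b c d e where "lanczos_state A v w \<gamma> k = (a,b,c,d,e)" by (cases "lanczos_state A v w \<gamma> k") auto
  then show ?thesis using Suc by (simp add: VV_def lzV_def Let_def)
qed

lemma fst3_st: "fst (snd (snd (lanczos_state A v w \<gamma> m))) = WW m"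
proof (cases m)
  case 0 then show ?thesis by (simp add: WW_def)
next
  case (Suc k)
  obtain a b c d e where "lanczos_state A v w \<gamma> k = (a,b,c,d,e)" by (cases "lanczos_state A v w \<gamma> k") auto
  then show ?thesis using Suc by (simp add: WW_def lzW_def Let_def)
qed

lemma st: "lanczos_state A v w \<gamma> m = (VV m, VV (Suc m), WW m, WW (Suc m), be (Suc m))"
  using fst_st[of m] fst3_st[of m]
  by (cases "lanczos_state A v w \<gamma> m") (simp add: VV_def WW_def lzV_def lzW_def lzbeta_def)

lemma st_Suc: "lanczos_state A v w \<gamma> (Suc m) =
   (VV (Suc m), (\<lambda>i. hV m i ** matrix_inv (matrix_inv (\<gamma> (Suc (Suc m))) ** hinner (hW m) (hV m))),
    WW (Suc m), (\<lambda>i. matrix_inv (\<gamma> (Suc (Suc m))) ** hW m i),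
    matrix_inv (\<gamma> (Suc (Suc m))) ** hinner (hW m) (hV m))"
  by (simp add: st[of m] Let_def hV_def hW_def lzalpha_def VV_def WW_def)

lemma be_SS: "be (Suc (Suc m)) = matrix_inv (\<gamma> (Suc (Suc m))) ** hinner (hW m) (hV m)"
  by (simp only: lzbeta_def diff_Suc_1 st_Suc) simp
lemma V_SS: "VV (Suc (Suc m)) = (\<lambda>i. hV m i ** matrix_inv (be (Suc (Suc m))))"
  unfolding be_SS by (simp only: VV_def lzV_def diff_Suc_1 st_Suc) simp
lemma W_SS: "WW (Suc (Suc m)) = (\<lambda>i. matrix_inv (\<gamma> (Suc (Suc m))) ** hW m i)"
  by (simp only: WW_def lzW_def diff_Suc_1 st_Suc) simp
lemma V1: "VV (Suc 0) = kronI v" by (simp add: VV_def lzV_def)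
lemma W1: "WW (Suc 0) = kronI (\<chi> i. cnj (w $ i))" by (simp add: WW_def lzW_def)
lemma be1: "be (Suc 0) = 0" by (simp add: lzbeta_def)
lemma V0: "VV 0 = (\<lambda>_. 0)" by (simp add: VV_def)
lemma W0: "WW 0 = (\<lambda>_. 0)" by (simp add: WW_def)
lemma al_def': "hinner (WW (Suc m)) (tvec A (VV (Suc m))) = al (Suc m)"
  by (simp add: lzalpha_def VV_def WW_def)

lemma W_rel:
  assumes "invertible (\<gamma> (Suc (Suc m)))"
  shows "dvec (WW (Suc m)) A = (\<lambda>i. \<gamma> (Suc (Suc m)) ** WW (Suc (Suc m)) i + al (Suc m) ** WW (Suc m) i + be (Suc m) ** WW m i)"
proof (rule ext)
  fix i
  have "\<gamma> (Suc (Suc m)) ** WW (Suc (Suc m)) i = hW m i"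
    by (simp add: W_SS matrix_mul_assoc inv_r[OF assms])
  then show "dvec (WW (Suc m)) A i = \<gamma> (Suc (Suc m)) ** WW (Suc (Suc m)) i + al (Suc m) ** WW (Suc m) i + be (Suc m) ** WW m i"
    by (simp add: hW_def)
qed

lemma V_rel:
  assumes "invertible (be (Suc (Suc m)))"
  shows "tvec A (VV (Suc m)) = (\<lambda>i. VV (Suc (Suc m)) i ** be (Suc (Suc m)) + VV (Suc m) i ** al (Suc m) + VV m i ** \<gamma> (Suc m))"
proof (rule ext)
  fix i
  have "VV (Suc (Suc m)) i ** be (Suc (Suc m)) = hV m i"
    by (simp add: V_SS matrix_mul_assoc[symmetric] inv_l[OF assms])
  then show "tvec A (VV (Suc m)) i = VV (Suc (Suc m)) i ** be (Suc (Suc m)) + VV (Suc m) i ** al (Suc m) + VV m i ** \<gamma> (Suc m)"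
    by (simp add: hV_def)
qed

end
section \<open>Biorthogonality\<close>

locale lz2 = lz A v w \<gamma>
  for A :: "'N::finite \<Rightarrow> 'N \<Rightarrow> complex^'m^'m"
    and v w :: "complex^'N"
    and \<gamma> :: "nat \<Rightarrow> complex^'m^'m" +
  fixes n :: nat
  assumes wv: "(\<Sum>i\<in>UNIV. cnj (w $ i) * v $ i) = 1"
    and gam: "\<forall>k\<ge>2. invertible (\<gamma> k)"
    and bet: "\<forall>k\<in>{2..n}. invertible (lzbeta A v w \<gamma> k)"
begin

lemma W1V1: "hinner (WW (Suc 0)) (VV (Suc 0)) = mat 1"
  by (simp add: W1 V1 kronI_def hinner_def mat_mm mat_sum wv)

lemma bio: "p \<le> n \<Longrightarrow> j \<le> p \<Longrightarrow> k \<le> p \<Longrightarrow> hinner (WW k) (VV j) = (if k = j \<and> j \<noteq> 0 then mat 1 else 0)"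
proof (induction p arbitrary: j k)
  case 0 then show ?case by (simp add: W0 hinner_l0)
next
  case (Suc p)
  show ?case
  proof (cases "j \<le> p \<and> k \<le> p")
    case True then show ?thesis using Suc by auto
  next
    case False
    show ?thesis
    proof (cases p)
      case 0
      then have "j \<le> 1" "k \<le> 1" using Suc by auto
      then show ?thesis
        by (cases j; cases k) (auto simp: W0 V0 hinner_l0 hinner_r0 W1V1)
    next
      case (Suc m)
      note pm = Suc
      have ih: "\<And>j k. j \<le> Suc m \<Longrightarrow> k \<le> Suc m \<Longrightarrow> hinner (WW k) (VV j) = (if k = j \<and> j \<noteq> 0 then mat 1 else 0)"
        using Suc.IH Suc.prems pm by auto
      have qn: "Suc (Suc m) \<le> n" using Suc.prems pm by auto
      have gq: "invertible (\<gamma> (Suc (Suc m)))" using gam by auto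
      have bq: "invertible (be (Suc (Suc m)))" using bet qn by auto
      have c2: "hinner (WW (Suc (Suc m))) (VV (Suc (Suc m))) = mat 1"
      proof -
        have "hinner (WW (Suc (Suc m))) (VV (Suc (Suc m))) = 
              (matrix_inv (\<gamma> (Suc (Suc m))) ** hinner (hW m) (hV m)) ** matrix_inv (be (Suc (Suc m)))"
          by (simp add: W_SS V_SS hinner_lmul hinner_rmul matrix_mul_assoc)
        also have "\<dots> = mat 1" by (simp add: be_SS[symmetric] inv_r[OF bq])
        finally show ?thesis .
      qed
      have c1: "hinner (WW (Suc (Suc m))) (VV j) = 0" if jm: "j \<le> Suc m" for j
      proof -
        have e: "\<And>j. hinner (hW m) (VV j) = hinner (WW (Suc m)) (tvec A (VV j)) - al (Suc m) ** hinner (WW (Suc m)) (VV j) - be (Suc m) ** hinner (WW m) (VV j)"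
          by (simp add: hW_def hinner_ldiff hinner_lmul hinner_dvec)
        have "hinner (hW m) (VV j) = 0"
        proof (cases j)
          case 0 then show ?thesis by (simp add: e V0 tvec_0 hinner_r0)
        next
          case (Suc l)
          show ?thesis
          proof (cases "l = m")
            case True then show ?thesis using Suc unfolding e by (simp add: al_def' ih)
          next
            case False
            then have lm: "l < m" using Suc jm by auto
            have bl: "invertible (be (Suc (Suc l)))" using bet lm qn by auto
            show ?thesis using lm unfolding e Suc V_rel[OF bl]
              by (cases "m = Suc l") (simp_all add: hinner_radd hinner_rmul ih)
          qed
        qed
        then show ?thesis by (simp add: W_SS hinner_lmul)
      qed
      have c3: "hinner (WW k) (VV (Suc (Suc m))) = 0" if km: "k \<le> Suc m" for k
      proof -
        have e: "\<And>k. hinner (WW k) (hV m) = hinner (WW k) (tvec A (VV (Suc m))) - hinner (WW k) (VV (Suc m)) ** al (Suc m) - hinner (WW k) (VV m) ** \<gamma> (Suc m)"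
          by (simp add: hV_def hinner_rdiff hinner_rmul)
        have "hinner (WW k) (hV m) = 0"
        proof (cases k)
          case 0 then show ?thesis by (simp add: e W0 hinner_l0)
        next
          case (Suc l)
          show ?thesis
          proof (cases "l = m")
            case True then show ?thesis using Suc by (simp add: e al_def' ih)
          next
            case False
            then have lm: "l < m" using Suc km by auto
            have gl: "invertible (\<gamma> (Suc (Suc l)))" using gam by auto
            show ?thesis using lm unfolding e Suc hinner_dvec[symmetric] W_rel[OF gl]
              by (cases "m = Suc l") (simp_all add: hinner_ladd hinner_lmul ih)
          qed
        qed
        then show ?thesis by (simp add: V_SS hinner_rmul)
      qed
      show ?thesis
      proof -
        have "j = Suc (Suc m) \<or> k = Suc (Suc m)" using False pm Suc.prems by auto
        moreover have "j \<le> Suc (Suc m)" "k \<le> Suc (Suc m)" using Suc.prems pm by auto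
        ultimately show ?thesis using c1 c2 c3 by (auto simp: le_Suc_eq)
      qed
    qed
  qed
qed

end
section \<open>Krylov spaces\<close>

lemma sum_1n: "(\<Sum>k\<in>{Suc 0..n}. f k) = (\<Sum>k<n. f (Suc k))"
  by (induction n) (simp_all add: atLeastAtMostSuc_conv add.commute)

lemma mat_pull: "mat \<beta> ** ((c::complex^'m^'m) ** P) = c ** (mat \<beta> ** P)"
  by (simp only: matrix_mul_assoc mat_comm[of \<beta> c])

lemma mH_mH: "mH (mH X) = X" by (simp add: mH_def vec_eq_iff)

lemma tvec_scal: "tvec (\<lambda>i1 i2. P i1 i2 ** c) (kronI a) = (\<lambda>i. tvec P (kronI a) i ** (c::complex^'m^'m))"
  by (rule ext) (simp add: tvec_def kronI_def mm_rsum matrix_mul_assoc[symmetric] mat_comm)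

lemma dvec_scal: "dvec (kronI b) (\<lambda>i1 i2. \<Sum>k\<in>S. c k ** P k i1 i2) = (\<lambda>i. \<Sum>k\<in>S. (c k::complex^'m^'m) ** dvec (kronI b) (P k) i)"
proof (rule ext)
  fix i
  have "dvec (kronI b) (\<lambda>i1 i2. \<Sum>k\<in>S. c k ** P k i1 i2) i = (\<Sum>l\<in>UNIV. \<Sum>k\<in>S. c k ** (mat (b $ l) ** P k l i))"
    unfolding dvec_def kronI_def
    by (simp add: mm_lsum mat_pull)
  also have "\<dots> = (\<Sum>k\<in>S. \<Sum>l\<in>UNIV. c k ** (mat (b $ l) ** P k l i))" by (rule sum.swap)
  also have "\<dots> = (\<Sum>k\<in>S. c k ** dvec (kronI b) (P k) i)"
    by (simp add: dvec_def kronI_def mm_lsum)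
  finally show "dvec (kronI b) (\<lambda>i1 i2. \<Sum>k\<in>S. c k ** P k i1 i2) i = (\<Sum>k\<in>S. c k ** dvec (kronI b) (P k) i)" .
qed

lemma krylov_eq: "krylov A (kronI a) n = spanR (\<lambda>k. tvec (tpow A (k - 1)) (kronI a)) n"
proof -
  have eq: "(\<lambda>i. \<Sum>k<n. tvec (\<lambda>i1 i2. tpow A k i1 i2 ** \<eta> k) (kronI a) i) =
            (\<lambda>i. \<Sum>k\<in>{1..n}. tvec (tpow A (k - 1)) (kronI a) i ** \<eta> (k - 1))" for \<eta>
    by (simp add: tvec_scal sum_1n)
  have eq2: "(\<lambda>i. \<Sum>k\<in>{1..n}. tvec (tpow A (k - 1)) (kronI a) i ** \<eta> k) =
            (\<lambda>i. \<Sum>k<n. tvec (\<lambda>i1 i2. tpow A k i1 i2 ** \<eta> (Suc k)) (kronI a) i)" for \<eta>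
    by (simp add: tvec_scal sum_1n)
  show ?thesis
  proof (rule set_eqI, rule iffI)
    fix x assume "x \<in> krylov A (kronI a) n"
    then obtain \<eta> where "x = (\<lambda>i. \<Sum>k<n. tvec (\<lambda>i1 i2. tpow A k i1 i2 ** \<eta> k) (kronI a) i)"
      unfolding krylov_def by blast
    then have "x = (\<lambda>i. \<Sum>k\<in>{1..n}. tvec (tpow A (k - 1)) (kronI a) i ** \<eta> (k - 1))"
      by (simp only: eq)
    then show "x \<in> spanR (\<lambda>k. tvec (tpow A (k - 1)) (kronI a)) n" unfolding spanR_iff by (rule exI[of _ "\<lambda>k. \<eta> (k - 1)"])
  next
    fix x assume "x \<in> spanR (\<lambda>k. tvec (tpow A (k - 1)) (kronI a)) n"
    then obtain \<eta> where "x = (\<lambda>i. \<Sum>k\<in>{1..n}. tvec (tpow A (k - 1)) (kronI a) i ** \<eta> k)"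
      unfolding spanR_iff by blast
    then have xe: "x = (\<lambda>i. \<Sum>k<n. tvec (\<lambda>i1 i2. tpow A k i1 i2 ** \<eta> (Suc k)) (kronI a) i)"
      by (simp only: eq2)
    show "x \<in> krylov A (kronI a) n" unfolding krylov_def
      by (rule CollectI, rule exI[of _ "\<lambda>k. \<eta> (Suc k)"], rule conjI[OF xe TrueI])
  qed
qed

lemma krylovD_eq: "krylovD (kronI b) A n = spanL (\<lambda>k. dvec (kronI b) (tpow A (k - 1))) n"
proof -
  have eq: "dvec (kronI b) (\<lambda>i1 i2. \<Sum>k<n. mH (\<eta> k) ** tpow A k i1 i2) =
            (\<lambda>i. \<Sum>k\<in>{1..n}. mH (\<eta> (k - 1)) ** dvec (kronI b) (tpow A (k - 1)) i)" for \<eta>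
    by (simp add: dvec_scal sum_1n)
  have eq2: "(\<lambda>i. \<Sum>k\<in>{1..n}. \<eta> k ** dvec (kronI b) (tpow A (k - 1)) i) =
            dvec (kronI b) (\<lambda>i1 i2. \<Sum>k<n. mH (mH (\<eta> (Suc k))) ** tpow A k i1 i2)" for \<eta>
    by (simp add: dvec_scal sum_1n mH_mH)
  show ?thesis
  proof (rule set_eqI, rule iffI)
    fix x assume "x \<in> krylovD (kronI b) A n"
    then obtain \<eta> where "x = dvec (kronI b) (\<lambda>i1 i2. \<Sum>k<n. mH (\<eta> k) ** tpow A k i1 i2)"
      unfolding krylovD_def by blast
    then have "x = (\<lambda>i. \<Sum>k\<in>{1..n}. mH (\<eta> (k - 1)) ** dvec (kronI b) (tpow A (k - 1)) i)"
      by (simp only: eq)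
    then show "x \<in> spanL (\<lambda>k. dvec (kronI b) (tpow A (k - 1))) n" unfolding spanL_iff by (rule exI[of _ "\<lambda>k. mH (\<eta> (k - 1))"])
  next
    fix x assume "x \<in> spanL (\<lambda>k. dvec (kronI b) (tpow A (k - 1))) n"
    then obtain \<eta> where "x = (\<lambda>i. \<Sum>k\<in>{1..n}. \<eta> k ** dvec (kronI b) (tpow A (k - 1)) i)"
      unfolding spanL_iff by blast
    then have xe: "x = dvec (kronI b) (\<lambda>i1 i2. \<Sum>k<n. mH (mH (\<eta> (Suc k))) ** tpow A k i1 i2)"
      by (simp only: eq2)
    show "x \<in> krylovD (kronI b) A n" unfolding krylovD_def
      by (rule CollectI, rule exI[of _ "\<lambda>k. mH (\<eta> (Suc k))"], rule conjI[OF xe TrueI])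
  qed
qed

context lz2
begin

lemmas biox = bio[OF order_refl]

definition K where "K k = tvec (tpow A (k - 1)) (kronI v)"
definition KD where "KD k = dvec (kronI (\<chi> i. cnj (w $ i))) (tpow A (k - 1))"

lemma K1: "K (Suc 0) = VV (Suc 0)" by (simp add: K_def V1 tpow_0 tvec_tid)
lemma KD1: "KD (Suc 0) = WW (Suc 0)" by (simp add: KD_def W1 tpow_0 dvec_tid)
lemma K_Suc: "tvec A (K (Suc k)) = K (Suc (Suc k))" by (simp add: K_def tvec_tvec tpow_Suc)
lemma KD_Suc: "dvec (KD (Suc k)) A = KD (Suc (Suc k))" by (simp add: KD_def dvec_dvec tpow_Suc')

lemma VV_in: "l \<le> N \<Longrightarrow> VV l \<in> spanR VV N"
  by (cases l) (auto simp: V0 spanR_zero intro!: spanR_gen)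
lemma WW_in: "l \<le> N \<Longrightarrow> WW l \<in> spanL WW N"
  by (cases l) (auto simp: W0 spanL_zero intro!: spanL_gen)

lemma VK: "k \<le> n \<Longrightarrow> j \<le> k \<Longrightarrow> VV j \<in> spanR K k"
proof (induction k arbitrary: j)
  case 0 then show ?case by (simp add: V0 spanR_zero)
next
  case (Suc k)
  show ?case
  proof (cases "j \<le> k")
    case True then show ?thesis using Suc by (intro spanR_mono[of k "Suc k"]) auto
  next
    case False
    then have j: "j = Suc k" using Suc by auto
    show ?thesis
    proof (cases k)
      case 0 then show ?thesis using j K1[symmetric] spanR_gen[of "Suc 0" "Suc 0" K] by simp
    next
      case (Suc m)
      note km = Suc
      have ih: "\<And>j. j \<le> Suc m \<Longrightarrow> VV j \<in> spanR K (Suc m)" using Suc.IH Suc.prems km by auto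
      have h1: "tvec A (VV (Suc m)) \<in> spanR K (Suc (Suc m))"
      proof (rule spanR_sub[OF _ spanR_tvec[OF ih[OF order_refl]]], intro ballI)
        fix j assume "j \<in> {1..Suc m}"
        then obtain l where l: "j = Suc l" "l \<le> m" by (cases j) auto
        show "tvec A (K j) \<in> spanR K (Suc (Suc m))" unfolding l K_Suc using l by (intro spanR_gen) auto
      qed
      have h2: "VV (Suc m) \<in> spanR K (Suc (Suc m))" by (rule spanR_mono[OF _ ih]) auto
      have h3: "VV m \<in> spanR K (Suc (Suc m))" by (rule spanR_mono[OF _ ih]) auto
      have "hV m \<in> spanR K (Suc (Suc m))"
        unfolding hV_def by (rule spanR_diff[OF spanR_diff[OF h1 spanR_mul[OF h2]] spanR_mul[OF h3]])
      then have "VV (Suc (Suc m)) \<in> spanR K (Suc (Suc m))" unfolding V_SS by (rule spanR_mul)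
      then show ?thesis using j km by simp
    qed
  qed
qed

lemma KV: "1 \<le> k \<Longrightarrow> k \<le> n \<Longrightarrow> K k \<in> spanR VV k"
proof (induction k)
  case 0 then show ?case by simp
next
  case (Suc k)
  show ?case
  proof (cases k)
    case 0 then show ?thesis using K1 spanR_gen[of "Suc 0" "Suc 0" VV] by simp
  next
    case (Suc m)
    note km = Suc
    have ih: "K (Suc m) \<in> spanR VV (Suc m)" using Suc.IH Suc.prems km by auto
    have "tvec A (K (Suc m)) \<in> spanR VV (Suc (Suc m))"
    proof (rule spanR_sub[OF _ spanR_tvec[OF ih]], intro ballI)
      fix j assume "j \<in> {1..Suc m}"
      then obtain l where l: "j = Suc l" "l \<le> m" by (cases j) auto
      have bl: "invertible (be (Suc (Suc l)))" using bet l Suc.prems km by auto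
      have a1: "VV (Suc (Suc l)) \<in> spanR VV (Suc (Suc m))" using l by (intro VV_in) auto
      have a2: "VV (Suc l) \<in> spanR VV (Suc (Suc m))" using l by (intro VV_in) auto
      have a3: "VV l \<in> spanR VV (Suc (Suc m))" using l by (intro VV_in) auto
      show "tvec A (VV j) \<in> spanR VV (Suc (Suc m))" unfolding l V_rel[OF bl]
        by (rule spanR_add[OF spanR_add[OF spanR_mul[OF a1] spanR_mul[OF a2]] spanR_mul[OF a3]])
    qed
    then show ?thesis using km K_Suc by simp
  qed
qed

lemma WKD: "k \<le> n \<Longrightarrow> j \<le> k \<Longrightarrow> WW j \<in> spanL KD k"
proof (induction k arbitrary: j)
  case 0 then show ?case by (simp add: W0 spanL_zero)
next
  case (Suc k)
  show ?case
  proof (cases "j \<le> k")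
    case True then show ?thesis using Suc by (intro spanL_mono[of k "Suc k"]) auto
  next
    case False
    then have j: "j = Suc k" using Suc by auto
    show ?thesis
    proof (cases k)
      case 0 then show ?thesis using j KD1[symmetric] spanL_gen[of "Suc 0" "Suc 0" KD] by simp
    next
      case (Suc m)
      note km = Suc
      have ih: "\<And>j. j \<le> Suc m \<Longrightarrow> WW j \<in> spanL KD (Suc m)" using Suc.IH Suc.prems km by auto
      have h1: "dvec (WW (Suc m)) A \<in> spanL KD (Suc (Suc m))"
      proof (rule spanL_sub[OF _ spanL_dvec[OF ih[OF order_refl]]], intro ballI)
        fix j assume "j \<in> {1..Suc m}"
        then obtain l where l: "j = Suc l" "l \<le> m" by (cases j) auto
        show "dvec (KD j) A \<in> spanL KD (Suc (Suc m))" unfolding l KD_Suc using l by (intro spanL_gen) auto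
      qed
      have h2: "WW (Suc m) \<in> spanL KD (Suc (Suc m))" by (rule spanL_mono[OF _ ih]) auto
      have h3: "WW m \<in> spanL KD (Suc (Suc m))" by (rule spanL_mono[OF _ ih]) auto
      have "hW m \<in> spanL KD (Suc (Suc m))"
        unfolding hW_def by (rule spanL_diff[OF spanL_diff[OF h1 spanL_mul[OF h2]] spanL_mul[OF h3]])
      then have "WW (Suc (Suc m)) \<in> spanL KD (Suc (Suc m))" unfolding W_SS by (rule spanL_mul)
      then show ?thesis using j km by simp
    qed
  qed
qed

lemma KDW: "1 \<le> k \<Longrightarrow> k \<le> n \<Longrightarrow> KD k \<in> spanL WW k"
proof (induction k)
  case 0 then show ?case by simp
next
  case (Suc k)
  show ?case
  proof (cases k)
    case 0 then show ?thesis using KD1 spanL_gen[of "Suc 0" "Suc 0" WW] by simp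
  next
    case (Suc m)
    note km = Suc
    have ih: "KD (Suc m) \<in> spanL WW (Suc m)" using Suc.IH Suc.prems km by auto
    have "dvec (KD (Suc m)) A \<in> spanL WW (Suc (Suc m))"
    proof (rule spanL_sub[OF _ spanL_dvec[OF ih]], intro ballI)
      fix j assume "j \<in> {1..Suc m}"
      then obtain l where l: "j = Suc l" "l \<le> m" by (cases j) auto
      have gl: "invertible (\<gamma> (Suc (Suc l)))" using gam by auto
      have a1: "WW (Suc (Suc l)) \<in> spanL WW (Suc (Suc m))" using l by (intro WW_in) auto
      have a2: "WW (Suc l) \<in> spanL WW (Suc (Suc m))" using l by (intro WW_in) auto
      have a3: "WW l \<in> spanL WW (Suc (Suc m))" using l by (intro WW_in) auto
      show "dvec (WW j) A \<in> spanL WW (Suc (Suc m))" unfolding l W_rel[OF gl]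
        by (rule spanL_add[OF spanL_add[OF spanL_mul[OF a1] spanL_mul[OF a2]] spanL_mul[OF a3]])
    qed
    then show ?thesis using km KD_Suc by simp
  qed
qed

lemma spanV: "spanR (lzV A v w \<gamma>) n = krylov A (kronI v) n"
proof -
  have c: "spanR (lzV A v w \<gamma>) n = spanR VV n" by (rule spanR_cong) (auto simp: VV_def)
  have "spanR VV n = spanR K n"
  proof (rule set_eqI, rule iffI)
    fix x assume "x \<in> spanR VV n"
    then show "x \<in> spanR K n" by (rule spanR_sub[rotated]) (auto intro: VK)
  next
    fix x assume "x \<in> spanR K n"
    then show "x \<in> spanR VV n" by (rule spanR_sub[rotated]) (auto intro: spanR_mono[OF _ KV])
  qed
  then show ?thesis using c krylov_eq[of A v n] by (simp add: K_def[abs_def])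
qed

lemma spanW: "spanL (lzW A v w \<gamma>) n = krylovD (kronI (\<chi> i. cnj (w $ i))) A n"
proof -
  have c: "spanL (lzW A v w \<gamma>) n = spanL WW n" by (rule spanL_cong) (auto simp: WW_def)
  have "spanL WW n = spanL KD n"
  proof (rule set_eqI, rule iffI)
    fix x assume "x \<in> spanL WW n"
    then show "x \<in> spanL KD n" by (rule spanL_sub[rotated]) (auto intro: WKD)
  next
    fix x assume "x \<in> spanL KD n"
    then show "x \<in> spanL WW n" by (rule spanL_sub[rotated]) (auto intro: spanL_mono[OF _ KDW])
  qed
  then show ?thesis using c krylovD_eq[of "\<chi> i. cnj (w $ i)" A n] by (simp add: KD_def[abs_def])
qed

lemma tmulWV: "i \<in> {1..n} \<Longrightarrow> j \<in> {1..n} \<Longrightarrow>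
   tmul (basisW A v w \<gamma> n) (basisV A v w \<gamma> n) i j = hinner (WW i) (VV j)"
  by (simp add: tmul_def basisW_def basisV_def hinner_def VV_def WW_def)

lemma tmulWAV: "i \<in> {1..n} \<Longrightarrow> j \<in> {1..n} \<Longrightarrow>
   tmul (tmul (basisW A v w \<gamma> n) A) (basisV A v w \<gamma> n) i j = hinner (WW i) (tvec A (VV j))"
  by (simp add: tmul_assoc) (simp add: tmul_def basisW_def basisV_def hinner_def tvec_def VV_def WW_def)

lemma triT_ok: assumes i: "i \<in> {1..n}" and j: "j \<in> {1..n}"
  shows "hinner (WW i) (tvec A (VV j)) = triT A v w \<gamma> n i j"
proof -
  obtain a where a: "i = Suc a" using i by (cases i) auto
  obtain b where b: "j = Suc b" using j by (cases j) auto
  have gl: "invertible (\<gamma> (Suc (Suc a)))" using gam by auto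
  have WR: "hinner (WW i) (tvec A (VV j)) = \<gamma> (Suc (Suc a)) ** hinner (WW (Suc (Suc a))) (VV j) + al (Suc a) ** hinner (WW (Suc a)) (VV j) + be (Suc a) ** hinner (WW a) (VV j)"
    unfolding a hinner_dvec[symmetric] W_rel[OF gl] by (simp add: hinner_ladd hinner_lmul)
  show ?thesis
  proof (cases "i = j")
    case True
    have "hinner (WW i) (tvec A (VV i)) = al i" using al_def'[of a] a by simp
    then show ?thesis using True i by (simp add: triT_def)
  next
    case False
    show ?thesis
    proof (cases "i < j")
      case True
      then have "Suc (Suc a) \<le> n" using a b j by auto
      then show ?thesis unfolding WR using True False i j a b by (simp add: triT_def biox)
    next
      case False2: False
      then have ji: "j < i" using False by auto
      then have bl: "invertible (be (Suc (Suc b)))" using bet a b i by auto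
      have VR: "hinner (WW i) (tvec A (VV j)) = hinner (WW i) (VV (Suc (Suc b))) ** be (Suc (Suc b)) + hinner (WW i) (VV (Suc b)) ** al (Suc b) + hinner (WW i) (VV b) ** \<gamma> (Suc b)"
        unfolding b V_rel[OF bl] by (simp add: hinner_radd hinner_rmul)
      show ?thesis unfolding VR using ji False i j a b by (simp add: triT_def biox)
    qed
  qed
qed

end

theorem mainTheorem2:
  fixes A :: "'N::finite \<Rightarrow> 'N \<Rightarrow> complex^'m^'m"
    and v w :: "complex^'N"
    and \<gamma> :: "nat \<Rightarrow> complex^'m^'m"
    and n :: nat
  assumes wv: "(\<Sum>i\<in>UNIV. cnj (w $ i) * v $ i) = 1"
    and gam: "\<forall>k\<ge>2. invertible (\<gamma> k)"
    and n1: "n \<ge> 1"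
    and bet: "\<forall>k\<in>{2..n}. invertible (lzbeta A v w \<gamma> k)"
  shows "(\<forall>j\<in>{1..n}. \<forall>k\<in>{1..n}.
            hinner (lzW A v w \<gamma> k) (lzV A v w \<gamma> j) = (if k = j then mat 1 else 0))
       \<and> (\<forall>i\<in>{1..n}. \<forall>j\<in>{1..n}.
            tmul (basisW A v w \<gamma> n) (basisV A v w \<gamma> n) i j = tid i j)
       \<and> spanR (lzV A v w \<gamma>) n = krylov A (kronI v) n
       \<and> spanL (lzW A v w \<gamma>) n = krylovD (kronI (\<chi> i. cnj (w $ i))) A n
       \<and> (\<forall>i\<in>{1..n}. \<forall>j\<in>{1..n}.
            tmul (tmul (basisW A v w \<gamma> n) A) (basisV A v w \<gamma> n) i j = triT A v w \<gamma> n i j)"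
proof -
  interpret lz2 A v w \<gamma> n using wv gam bet by unfold_locales
  have a: "\<forall>j\<in>{1..n}. \<forall>k\<in>{1..n}.
            hinner (lzW A v w \<gamma> k) (lzV A v w \<gamma> j) = (if k = j then mat 1 else 0)"
  proof (intro ballI)
    fix j k assume j: "j \<in> {1..n}" and k: "k \<in> {1..n}"
    have "hinner (WW k) (VV j) = (if k = j then mat 1 else 0)" using j k biox[of j k] by auto
    then show "hinner (lzW A v w \<gamma> k) (lzV A v w \<gamma> j) = (if k = j then mat 1 else 0)"
      using j k by (simp add: VV_def WW_def)
  qed
  have b: "\<forall>i\<in>{1..n}. \<forall>j\<in>{1..n}.
            tmul (basisW A v w \<gamma> n) (basisV A v w \<gamma> n) i j = tid i j"
  proof (intro ballI)
    fix i j assume i: "i \<in> {1..n}" and j: "j \<in> {1..n}"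
    show "tmul (basisW A v w \<gamma> n) (basisV A v w \<gamma> n) i j = tid i j"
      using i j biox[of j i] by (simp add: tmulWV tid_def)
  qed
  have c: "\<forall>i\<in>{1..n}. \<forall>j\<in>{1..n}.
            tmul (tmul (basisW A v w \<gamma> n) A) (basisV A v w \<gamma> n) i j = triT A v w \<gamma> n i j"
    by (simp add: tmulWAV triT_ok)
  show ?thesis using a b c spanV spanW by blast
qed

end
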